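(* Let $u$ be a node with a set of incident directed edges $(u,v)$, each with identifier $\mathrm{id}(u,v)=\mathrm{id}(u)\circ\mathrm{id}(v)$ (concatenation); each such edge is blue if $v$ is playing and red otherwise, and $u$ does not know which edges are blue. Let $h_1,\dots,h_s$ be independent, perfectly random hash functions mapping edges to $[q]=\{0,\dots,q-1\}$ (the trials); an edge participates in trial $i$ if $h_j(e)=i$ for some $j$. For each trial $i$, $u$ knows $X(i)$ (the XOR of identifiers of all its edges participating in trial $i$), $x(i)$ (their number), $X'(i)$ (the XOR of identifiers of its blue edges participating in trial $i$) and $x'(i)$ (their number). Node $u$ repeatedly does the following while possible: find a trial $i$ with $x(i)=x'(i)+1$, identify the red edge with identifier $X(i)\oplus X'(i)$, and for every trial $i'$ in which this edge participates replace $X(i')$ by $X(i')\oplus$ (its identifier) and decrease $x(i')$ by $1$. Suppose $u$ is incident to at most $p$ red edges, $s\ge 4$ and $q\ge 4esp$. Then for every positive integer $k$, \[ \Pr[u\text{ fails to identify at least }k\text{ red edges}]\le 2\left(\frac{2sk}{q}\right)^{(s-2)k/2}. \]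
   Context: This is the analysis of an identification procedure in which a node $u$ wants to learn which of its neighbors belong to a set of "playing" nodes; the values $X'(i),x'(i)$ are assumed to be delivered to $u$ correctly. "Fails to identify" refers to red edges that remain unidentified when the procedure stops. *)

theory Defs
  imports "HOL-Probability.Probability"
begin

text \<open>Hash functions: H j e is the value of the hash function h_j (j < s) on edge e;
  the s hash functions are independent, perfectly random functions E \<rightarrow> [q],
  i.e. H is drawn uniformly from the following finite set.\<close>
definition hash_space :: "'e set \<Rightarrow> nat \<Rightarrow> nat \<Rightarrow> (nat \<Rightarrow> 'e \<Rightarrow> nat) set" where
  "hash_space E s q = PiE {..<s} (\<lambda>_. PiE E (\<lambda>_. {..<q}))"

definition participates :: "nat \<Rightarrow> (nat \<Rightarrow> 'e \<Rightarrow> nat) \<Rightarrow> 'e \<Rightarrow> nat \<Rightarrow> bool" where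
  "participates s H e i \<longleftrightarrow> (\<exists>j<s. H j e = i)"

text \<open>One step of the identification procedure, on the set S of still unidentified red
  edges: a trial i with x(i) = x'(i) + 1 is exactly a trial in which exactly one
  unidentified red edge participates; that edge e (whose identifier is X(i) xor X'(i))
  gets identified and removed.\<close>
definition peel_step :: "nat \<Rightarrow> (nat \<Rightarrow> 'e \<Rightarrow> nat) \<Rightarrow> 'e set \<Rightarrow> 'e set \<Rightarrow> bool" where
  "peel_step s H S S' \<longleftrightarrow>
     (\<exists>e\<in>S. S' = S - {e} \<and>
        (\<exists>i. participates s H e i \<and> {e'\<in>S. participates s H e' i} = {e}))"

definition stuck :: "nat \<Rightarrow> (nat \<Rightarrow> 'e \<Rightarrow> nat) \<Rightarrow> 'e set \<Rightarrow> bool" where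
  "stuck s H S \<longleftrightarrow> \<not> (\<exists>S'. peel_step s H S S')"

definition fails_at_least :: "'e set \<Rightarrow> nat \<Rightarrow> (nat \<Rightarrow> 'e \<Rightarrow> nat) \<Rightarrow> nat \<Rightarrow> bool" where
  "fails_at_least R s H k \<longleftrightarrow>
     (\<exists>S. (peel_step s H)\<^sup>*\<^sup>* R S \<and> stuck s H S \<and> card S \<ge> k)"

end

theory Submission
  imports Defs
begin

lemma pow_le_exp_fact: "real n ^ n \<le> exp (real n) * fact n"
proof -
  have s: "summable (\<lambda>i. real n ^ i /\<^sub>R fact i)"
    using exp_converges[of "real n"] sums_summable by blast
  have "sum (\<lambda>i. real n ^ i /\<^sub>R fact i) {n} \<le> (\<Sum>i. real n ^ i /\<^sub>R fact i)"
    by (rule sum_le_suminf[OF s]) auto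
  also have "\<dots> = exp (real n)" using exp_converges[of "real n"] sums_unique by metis
  finally have "real n ^ n / fact n \<le> exp (real n)" by (simp add: divide_inverse mult.commute)
  then show ?thesis by (simp add: divide_le_eq mult.commute)
qed

lemma choose_le_fact: "real (n choose k) * fact k \<le> real n ^ k"
proof (cases "k \<le> n")
  case True
  have "fact k * fact (n - k) * (n choose k) = fact n" using binomial_fact_lemma[OF True] .
  hence eq: "fact (n - k) * ((n choose k) * fact k) = (fact n :: nat)" by (simp only: ac_simps)
  have "(n choose k) * fact k = (fact (n - k) * ((n choose k) * fact k)) div (fact (n - k) :: nat)" by simp
  also have "\<dots> = fact n div fact (n - k)" by (simp only: eq)
  also have "\<dots> \<le> n ^ k" by (rule fact_div_fact_le_pow[OF True])
  finally have "(n choose k) * fact k \<le> n ^ k" .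
  hence "real ((n choose k) * fact k) \<le> real (n ^ k)" by linarith
  thus ?thesis by simp
next
  case False thus ?thesis by (simp add: binomial_eq_0)
qed

lemma choose_le_exp: assumes "k > 0" shows "real (n choose k) \<le> (exp 1 * real n / real k) ^ k"
proof -
  have fk: "fact k > (0::real)" by simp
  have kk: "real k ^ k > 0" using assms by simp
  have "real (n choose k) * real k ^ k \<le> real (n choose k) * (exp (real k) * fact k)"
    using pow_le_exp_fact[of k] by (intro mult_left_mono) auto
  also have "\<dots> = exp (real k) * (real (n choose k) * fact k)" by simp
  also have "\<dots> \<le> exp (real k) * real n ^ k" using choose_le_fact by (intro mult_left_mono) auto
  also have "\<dots> = (exp 1 * real n) ^ k" by (simp add: power_mult_distrib exp_of_nat_mult[symmetric])
  finally have "real (n choose k) \<le> (exp 1 * real n) ^ k / real k ^ k" using kk by (simp add: le_divide_eq)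
  thus ?thesis by (simp add: power_divide)
qed


lemma mono_ct:
  fixes c :: real and k t :: nat
  assumes c: "c > 0" and k: "1 \<le> k" "k \<le> t" and ect: "exp 1 * c * t \<le> 1"
  shows "(c * t) ^ t \<le> (c * k) ^ k"
proof -
  have kpos: "real k > 0" using k by simp
  have "real t / real k = 1 + (real t - real k) / real k" using kpos by (simp add: field_simps)
  also have "\<dots> \<le> exp ((real t - real k) / real k)" by (rule exp_ge_add_one_self)
  finally have h1: "real t / real k \<le> exp ((real t - real k) / real k)" .
  have "(real t / real k) ^ k \<le> exp ((real t - real k) / real k) ^ k"
    using h1 kpos by (intro power_mono) auto
  also have "\<dots> = exp (real k * ((real t - real k) / real k))" by (rule exp_of_nat_mult[symmetric])
  also have "\<dots> = exp (real (t - k))" using kpos k by (simp add: of_nat_diff)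
  also have "\<dots> = exp 1 ^ (t - k)" by (simp add: exp_of_nat_mult[symmetric])
  finally have h2: "(real t / real k) ^ k \<le> exp 1 ^ (t - k)" .
  have ctnn: "c * t \<ge> 0" using c by simp
  have "(c * t) ^ t = (c * t) ^ k * (c * t) ^ (t - k)"
    using k by (simp add: power_add[symmetric])
  also have "(c * t) ^ k = (c * k) ^ k * (real t / real k) ^ k"
    using kpos by (simp add: power_mult_distrib power_divide field_simps)
  also have "(c * k) ^ k * (real t / real k) ^ k * (c * t) ^ (t - k) \<le> (c * k) ^ k * exp 1 ^ (t - k) * (c * t) ^ (t - k)"
    using h2 c ctnn by (intro mult_right_mono mult_left_mono) auto
  also have "\<dots> = (c * k) ^ k * (exp 1 * c * t) ^ (t - k)" by (simp add: power_mult_distrib mult.assoc)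
  also have "\<dots> \<le> (c * k) ^ k * 1"
    using ect c by (intro mult_left_mono power_le_one) auto
  finally show ?thesis by simp
qed


lemma term_bound:
  fixes N p s q k t :: nat
  assumes s4: "s \<ge> 4" and k1: "1 \<le> k" and kt: "k \<le> t" and tN: "t \<le> N" and Np: "N \<le> p"
    and q: "real q \<ge> 4 * exp 1 * real s * real p"
  shows "real (N choose t) * real (q choose (s*t div 2)) * (real (s*t div 2) / real q) ^ (s*t)
          \<le> (1/2)^t * (2 * real s * real k / real q) powr ((real s - 2) * real k / 2)"
proof -
  define m where "m = s * t div 2"
  define T where "T = real s * real t"
  define e where "e = exp (1::real)"
  have e0: "e > 0" and e3: "e \<le> 3" and e1: "e \<ge> 1" using exp_le by (auto simp: e_def)
  have t1: "t \<ge> 1" and p1: "p \<ge> 1" using k1 kt tN Np by auto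
  have st4: "s * t \<ge> 4" using s4 t1 by (metis mult_le_mono nat_mult_1_right)
  have m2: "m \<ge> 2" using st4 by (simp add: m_def)
  have "2 * m \<le> s * t" unfolding m_def by simp
  hence "real (2 * m) \<le> real (s * t)" by (simp only: of_nat_le_iff)
  hence mT: "real m \<le> T / 2" unfolding T_def by simp
  have mst: "m \<le> s * t" unfolding m_def by simp
  have Tst: "real (s * t - m) \<ge> T / 2" using mT mst unfolding T_def by (simp only: of_nat_diff of_nat_mult)
  have "4 * e * real s * real p > 0" using e0 s4 p1 by simp
  hence q0: "real q > 0" using q unfolding e_def[symmetric] by linarith
  have Tp: "T \<le> real s * real p" unfolding T_def using tN Np by (intro mult_left_mono) auto
  have qsp: "e * real p \<le> real q / (4 * real s)" using q s4 unfolding e_def[symmetric]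
    by (simp add: field_simps)
  have c1: "real (N choose t) \<le> (e * real p / real t) ^ t"
  proof -
    have "real (N choose t) \<le> (e * real N / real t) ^ t" using choose_le_exp[of t N] t1 by (simp add: e_def)
    also have "\<dots> \<le> (e * real p / real t) ^ t" using Np e0 by (intro power_mono divide_right_mono mult_left_mono) auto
    finally show ?thesis .
  qed
  have c2: "real (q choose m) \<le> (e * real q / real m) ^ m" using choose_le_exp[of m q] m2 by (simp add: e_def)
  have m0: "real m > 0" using m2 by simp
  have mq1: "real m / real q \<le> 1" 
  proof -
    have "real m \<le> real s * real p / 2" using mT Tp by simp
    also have "\<dots> = (1/2) * (real s * real p)" by simp
    also have "\<dots> \<le> (4 * e) * (real s * real p)" using e1 by (intro mult_right_mono) auto
    also have "\<dots> = 4 * e * real s * real p" by (simp add: mult.assoc)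
    also have "\<dots> \<le> real q" using q unfolding e_def[symmetric] by linarith
    finally show ?thesis using q0 by simp
  qed
  define a where "a = e * T / (2 * real q)"
  have a0: "a > 0" unfolding a_def T_def using e0 q0 s4 t1 by simp
  have X: "(e * real q / real m) ^ m * (real m / real q) ^ (s*t) \<le> a powr (T / 2)"
  proof -
    have "(e * real q / real m) ^ m * (real m / real q) ^ (s*t)
        = (e * real q / real m) ^ m * ((real m / real q) ^ m * (real m / real q) ^ (s*t - m))"
    proof -
      have "s*t = m + (s*t - m)" using mst by simp
      hence "(real m / real q) ^ (s*t) = (real m / real q) ^ m * (real m / real q) ^ (s*t - m)"
        by (metis power_add)
      thus ?thesis by simp
    qed
    also have "\<dots> = e ^ m * (real m / real q) ^ (s*t - m)"
    proof -
      have ee: "(e * real q / real m) * (real m / real q) = e" using m0 q0 by (simp add: field_simps)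
      have "(e * real q / real m) ^ m * ((real m / real q) ^ m * (real m / real q) ^ (s*t - m))
          = ((e * real q / real m) * (real m / real q)) ^ m * (real m / real q) ^ (s*t - m)"
        by (simp only: power_mult_distrib mult.assoc)
      thus ?thesis by (simp only: ee)
    qed
    also have "\<dots> \<le> exp (T/2) * (real m / real q) powr (T / 2)"
    proof (intro mult_mono)
      show "e ^ m \<le> exp (T / 2)" using mT by (simp add: e_def exp_of_nat_mult[symmetric])
      have "(real m / real q) ^ (s*t - m) = (real m / real q) powr (real (s*t - m))"
        using m0 q0 by (simp add: powr_realpow)
      also have "\<dots> \<le> (real m / real q) powr (T / 2)"
        using Tst mq1 m0 q0 by (intro powr_mono') auto
      finally show "(real m / real q) ^ (s*t - m) \<le> (real m / real q) powr (T / 2)" .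
    qed auto
    also have "\<dots> = (e * (real m / real q)) powr (T / 2)"
    proof -
      have "(e * (real m / real q)) powr (T / 2) = e powr (T / 2) * (real m / real q) powr (T / 2)"
        by (rule powr_mult)
      moreover have "e powr (T / 2) = exp (T / 2)" by (simp add: e_def powr_def)
      ultimately show ?thesis by simp
    qed
    also have "\<dots> \<le> a powr (T / 2)"
    proof (rule powr_mono2)
      show "0 \<le> T / 2" unfolding T_def by simp
      show "0 \<le> e * (real m / real q)" using e0 by simp
      have "real m / real q \<le> (T / 2) / real q" using mT q0 by (intro divide_right_mono) auto
      hence "e * (real m / real q) \<le> e * ((T / 2) / real q)" using e0 by (intro mult_left_mono) auto
      also have "\<dots> = a" unfolding a_def by simp
      finally show "e * (real m / real q) \<le> a" .
    qed
    finally show ?thesis .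
  qed
  define c where "c = e * real s / (2 * real q)"
  have c0: "c > 0" unfolding c_def using e0 q0 s4 by simp
  have ac: "a = c * real t" unfolding a_def c_def T_def by simp
  have ept: "e * real p / real t \<le> e / (8 * a)"
  proof -
    have "e * real p / real t \<le> (real q / (4 * real s)) / real t"
      using qsp t1 by (intro divide_right_mono) auto
    also have "\<dots> = e / (8 * a)" unfolding a_def T_def using e0 q0 s4 t1 by (simp add: field_simps)
    finally show ?thesis .
  qed
  have "real (N choose t) * real (q choose m) * (real m / real q) ^ (s*t)
      \<le> (e * real p / real t) ^ t * ((e * real q / real m) ^ m * (real m / real q) ^ (s*t))"
    unfolding mult.assoc
    using c1 c2 by (intro mult_mono) auto
  also have "\<dots> \<le> (e / (8 * a)) ^ t * a powr (T / 2)"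
    using ept X e0 t1 a0 by (intro mult_mono power_mono) auto
  also have "\<dots> = (e / 8) ^ t * a powr ((real s - 2) * real t / 2)"
  proof -
    have "(e / (8 * a)) ^ t = (e / 8) ^ t / a powr (real t)"
      using a0 by (simp add: powr_realpow power_divide power_mult_distrib)
    moreover have "a powr (T / 2) = a powr (real t) * a powr ((real s - 2) * real t / 2)"
    proof -
      have "T / 2 = real t + (real s - 2) * real t / 2" unfolding T_def by (simp add: field_simps)
      hence "a powr (T / 2) = a powr (real t + (real s - 2) * real t / 2)" by (simp only:)
      thus ?thesis by (simp only: powr_add)
    qed
    ultimately show ?thesis using a0 by simp
  qed
  also have "\<dots> \<le> (1 / 2) ^ t * (2 * real s * real k / real q) powr ((real s - 2) * real k / 2)"
  proof (rule mult_mono)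
    show "(e / 8) ^ t \<le> (1 / 2) ^ t" using e0 e3 by (intro power_mono) auto
    have ect: "exp 1 * c * real t \<le> 1"
    proof -
      have "exp 1 * c * real t = e * e * (real s * real t) / (2 * real q)" unfolding c_def e_def by simp
      also have "\<dots> \<le> e * e * (real s * real p) / (2 * real q)"
        using Tp e0 q0 tN Np unfolding T_def by (intro divide_right_mono mult_left_mono) auto
      also have "\<dots> = e * (e * real p * real s) / (2 * real q)" by (simp add: ac_simps)
      also have "\<dots> \<le> e * (real q / 4) / (2 * real q)"
      proof -
        have "e * real p * real s \<le> real q / (4 * real s) * real s" using qsp by (intro mult_right_mono) auto
        also have "\<dots> = real q / 4" using s4 by simp
        finally show ?thesis using e0 q0 by (intro divide_right_mono mult_left_mono) auto
      qed
      also have "\<dots> = e / 8" using q0 by simp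
      also have "\<dots> \<le> 1" using e3 by simp
      finally show ?thesis .
    qed
    have mono: "(c * real t) ^ t \<le> (c * real k) ^ k" by (rule mono_ct[OF c0 k1 kt ect])
    have ex: "(real s - 2) / 2 \<ge> 0" using s4 by simp
    have "a powr ((real s - 2) * real t / 2) = ((c * real t) ^ t) powr ((real s - 2) / 2)"
      using a0 c0 t1 unfolding ac by (simp add: powr_realpow[symmetric] powr_powr mult.commute)
    also have "\<dots> \<le> ((c * real k) ^ k) powr ((real s - 2) / 2)"
      using mono ex c0 by (intro powr_mono2) auto
    also have "\<dots> = (c * real k) powr ((real s - 2) * real k / 2)"
      using c0 k1 by (simp add: powr_realpow[symmetric] powr_powr mult.commute)
    also have "\<dots> \<le> (2 * real s * real k / real q) powr ((real s - 2) * real k / 2)"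
    proof (rule powr_mono2)
      show "0 \<le> (real s - 2) * real k / 2" using s4 by simp
      show "0 \<le> c * real k" using c0 by simp
      show "c * real k \<le> 2 * real s * real k / real q"
      proof -
        have "e * (real k * real s) \<le> 4 * (real k * real s)" using e3 by (intro mult_right_mono) auto
        thus ?thesis unfolding c_def using q0 by (simp add: field_simps)
      qed
    qed
    finally show "a powr ((real s - 2) * real t / 2) \<le> (2 * real s * real k / real q) powr ((real s - 2) * real k / 2)" .
  qed auto
  finally show ?thesis unfolding m_def .
qed


lemma geom_half: "(\<Sum>t\<in>{k..N}. (1/2::real) ^ t) \<le> 2"
proof -
  have "(\<Sum>t\<in>{k..N}. (1/2::real) ^ t) \<le> (\<Sum>t\<in>{..<Suc N}. (1/2::real) ^ t)"
    by (rule sum_mono2) auto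
  also have "\<dots> = (1 - (1/2) ^ Suc N) / (1 - 1/2)" by (simp add: sum_gp_strict)
  also have "\<dots> \<le> 2" by simp
  finally show ?thesis .
qed

lemma ratio:
  fixes m q n t s :: nat
  assumes q: "q > 0" and tn: "t \<le> n"
  shows "(real m ^ t * real q ^ (n - t)) ^ s / (real q ^ n) ^ s = (real m / real q) ^ (s * t)"
proof -
  have "n = t + (n - t)" using tn by simp
  hence qn: "real q ^ n = real q ^ t * real q ^ (n - t)" by (metis power_add)
  have "(real m ^ t * real q ^ (n - t)) / (real q ^ t * real q ^ (n - t)) = real m ^ t / real q ^ t"
    using q by simp
  hence "(real m ^ t * real q ^ (n - t)) ^ s / (real q ^ n) ^ s = (real m ^ t / real q ^ t) ^ s"
    unfolding qn by (simp add: power_divide[symmetric])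
  also have "\<dots> = ((real m / real q) ^ t) ^ s" by (simp only: power_divide)
  also have "\<dots> = (real m / real q) ^ (s * t)" by (metis power_mult mult.commute)
  finally show ?thesis .
qed

lemma m_le_q:
  fixes s t p q :: nat
  assumes "t \<le> p" and q: "real q \<ge> 4 * exp 1 * real s * real p"
  shows "s * t div 2 \<le> q"
proof -
  have "s * t div 2 \<le> s * t" by simp
  also have "\<dots> \<le> s * p" using assms(1) by simp
  finally have "real (s * t div 2) \<le> real s * real p" by (metis of_nat_le_iff of_nat_mult)
  also have "\<dots> = 1 * (real s * real p)" by simp
  also have "\<dots> \<le> (4 * exp 1) * (real s * real p)"
  proof (rule mult_right_mono)
    have "exp (1::real) \<ge> 1" by simp
    thus "1 \<le> 4 * exp (1::real)" by linarith
  qed simp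
  also have "\<dots> \<le> real q" using q by (simp add: mult.assoc)
  finally show ?thesis by simp
qed

lemma reach_subset: "(peel_step s H)\<^sup>*\<^sup>* R S \<Longrightarrow> S \<subseteq> R"
  by (induction rule: rtranclp_induct) (auto simp: peel_step_def)

lemma stuck_two:
  assumes st: "stuck s H S" and e: "e \<in> S" and pe: "participates s H e i"
  shows "\<exists>e'\<in>S. e' \<noteq> e \<and> participates s H e' i"
proof (rule ccontr)
  assume "\<not> ?thesis"
  hence "{e'\<in>S. participates s H e' i} = {e}" using e pe by auto
  hence "peel_step s H S (S - {e})" using e pe unfolding peel_step_def by blast
  thus False using st unfolding stuck_def by blast
qed

lemma stuck_card:
  assumes fin: "finite S" and st: "stuck s H S"
  shows "2 * card {i. \<exists>e\<in>S. participates s H e i} \<le> s * card S"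
proof -
  define U where "U = {i. \<exists>e\<in>S. participates s H e i}"
  have Ueq: "U = (\<Union>e\<in>S. (\<lambda>j. H j e) ` {..<s})" unfolding U_def participates_def by auto
  have finU: "finite U" using fin unfolding Ueq by auto
  have "2 * card U = (\<Sum>i\<in>U. 2)" by simp
  also have "\<dots> \<le> (\<Sum>i\<in>U. card {e\<in>S. participates s H e i})"
  proof (rule sum_mono)
    fix i assume "i \<in> U"
    then obtain e where e: "e \<in> S" "participates s H e i" unfolding U_def by auto
    then obtain e' where e': "e' \<in> S" "e' \<noteq> e" "participates s H e' i" using stuck_two[OF st] by blast
    have sub: "{e, e'} \<subseteq> {e\<in>S. participates s H e i}" using e e' by auto
    have "finite {e\<in>S. participates s H e i}" using fin by auto
    hence "card {e, e'} \<le> card {e\<in>S. participates s H e i}" using sub by (rule card_mono)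
    thus "2 \<le> card {e\<in>S. participates s H e i}" using e' by simp
  qed
  also have "\<dots> = (\<Sum>e\<in>S. card {i\<in>U. participates s H e i})"
    by (rule sum_multicount_gen[symmetric]) (auto simp: fin finU)
  also have "\<dots> \<le> (\<Sum>e\<in>S. s)"
  proof (rule sum_mono)
    fix e assume "e \<in> S"
    have "{i\<in>U. participates s H e i} \<subseteq> (\<lambda>j. H j e) ` {..<s}" unfolding participates_def by auto
    hence "card {i\<in>U. participates s H e i} \<le> card ((\<lambda>j. H j e) ` {..<s})" by (intro card_mono) auto
    also have "\<dots> \<le> s" using card_image_le[of "{..<s}" "\<lambda>j. H j e"] by simp
    finally show "card {i\<in>U. participates s H e i} \<le> s" .
  qed
  also have "\<dots> = s * card S" by simp
  finally show ?thesis unfolding U_def .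
qed

lemma fails_imp:
  assumes "finite R" and "fails_at_least R s H k"
  shows "\<exists>S. S \<subseteq> R \<and> k \<le> card S \<and> 2 * card {i. \<exists>e\<in>S. participates s H e i} \<le> s * card S"
proof -
  obtain S where S: "(peel_step s H)\<^sup>*\<^sup>* R S" "stuck s H S" "card S \<ge> k"
    using assms(2) unfolding fails_at_least_def by blast
  have "S \<subseteq> R" using reach_subset[OF S(1)] .
  moreover have "finite S" using \<open>S \<subseteq> R\<close> assms(1) finite_subset by blast
  ultimately show ?thesis using S stuck_card by blast
qed

lemma extend_subset:
  assumes "finite A" "U \<subseteq> A" "card U \<le> m" "m \<le> card A"
  shows "\<exists>M. U \<subseteq> M \<and> M \<subseteq> A \<and> card M = m"
proof -
  have fU: "finite U" using assms finite_subset by blast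
  have "card (A - U) = card A - card U" using assms fU by (simp add: card_Diff_subset)
  hence "m - card U \<le> card (A - U)" using assms by simp
  then obtain X where X: "X \<subseteq> A - U" "card X = m - card U" using obtain_subset_with_card_n by metis
  have fX: "finite X" using X assms finite_subset by (meson finite_Diff)
  have "card (U \<union> X) = card U + card X" using X fU fX by (intro card_Un_disjoint) auto
  hence "card (U \<union> X) = m" using X assms by simp
  thus ?thesis using X assms by (intro exI[of _ "U \<union> X"]) auto
qed

lemma card_bad:
  assumes fE: "finite E" and SE: "S \<subseteq> E" and Mq: "M \<subseteq> {..<q}"
  shows "card {H \<in> hash_space E s q. \<forall>j<s. \<forall>e\<in>S. H j e \<in> M}
         = (card M ^ card S * q ^ (card E - card S)) ^ s"
proof -
  have eq: "{H \<in> hash_space E s q. \<forall>j<s. \<forall>e\<in>S. H j e \<in> M}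
        = PiE {..<s} (\<lambda>_. PiE E (\<lambda>e. if e \<in> S then M else {..<q}))"
  proof (rule set_eqI, rule iffI)
    fix H assume "H \<in> {H \<in> hash_space E s q. \<forall>j<s. \<forall>e\<in>S. H j e \<in> M}"
    hence H1: "\<forall>j\<in>{..<s}. (\<forall>e\<in>E. H j e \<in> {..<q}) \<and> H j \<in> extensional E"
      and H2: "H \<in> extensional {..<s}" and H3: "\<forall>j<s. \<forall>e\<in>S. H j e \<in> M"
      unfolding hash_space_def PiE_iff by auto
    show "H \<in> PiE {..<s} (\<lambda>_. PiE E (\<lambda>e. if e \<in> S then M else {..<q}))"
      unfolding PiE_iff using H1 H2 H3 by auto
  next
    fix H assume "H \<in> PiE {..<s} (\<lambda>_. PiE E (\<lambda>e. if e \<in> S then M else {..<q}))"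
    hence H1: "\<forall>j\<in>{..<s}. (\<forall>e\<in>E. H j e \<in> (if e \<in> S then M else {..<q})) \<and> H j \<in> extensional E"
      and H2: "H \<in> extensional {..<s}"
      unfolding PiE_iff by auto
    have H3: "\<forall>j<s. \<forall>e\<in>S. H j e \<in> M"
    proof (intro allI impI ballI)
      fix j e assume j: "j < s" and e: "e \<in> S"
      hence "e \<in> E" using SE by auto
      hence "H j e \<in> (if e \<in> S then M else {..<q})" using H1 j by auto
      thus "H j e \<in> M" using e by simp
    qed
    have H4: "\<forall>j\<in>{..<s}. (\<forall>e\<in>E. H j e \<in> {..<q})"
    proof (intro ballI)
      fix j e assume j: "j \<in> {..<s}" and e: "e \<in> E"
      show "H j e \<in> {..<q}"
      proof (cases "e \<in> S")
        case True hence "H j e \<in> M" using H3 j by auto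
        thus ?thesis using Mq by auto
      next
        case False
        have "H j e \<in> (if e \<in> S then M else {..<q})" using H1 j e by auto
        thus ?thesis using False by simp
      qed
    qed
    show "H \<in> {H \<in> hash_space E s q. \<forall>j<s. \<forall>e\<in>S. H j e \<in> M}"
      unfolding hash_space_def PiE_iff using H1 H2 H3 H4 by auto
  qed
  have fS: "finite S" using fE SE finite_subset by blast
  have "(\<Prod>e\<in>E. card (if e \<in> S then M else {..<q})) = (\<Prod>e\<in>E. if e \<in> S then card M else q)"
    by (intro prod.cong) auto
  also have "\<dots> = (\<Prod>e\<in>E \<inter> {e. e \<in> S}. card M) * (\<Prod>e\<in>E \<inter> - {e. e \<in> S}. q)"
    using fE by (rule prod.If_cases)
  also have "E \<inter> {e. e \<in> S} = S" using SE by auto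
  also have "E \<inter> - {e. e \<in> S} = E - S" by auto
  finally have "(\<Prod>e\<in>E. card (if e \<in> S then M else {..<q})) = card M ^ card S * q ^ card (E - S)"
    using fS fE by simp
  also have "card (E - S) = card E - card S" using SE fS by (simp add: card_Diff_subset)
  finally have "(\<Prod>e\<in>E. card (if e \<in> S then M else {..<q})) = card M ^ card S * q ^ (card E - card S)" .
  thus ?thesis unfolding eq using fE by (simp add: card_PiE)
qed

lemma card_space:
  assumes fE: "finite E"
  shows "card (hash_space E s q) = (q ^ card E) ^ s"
  unfolding hash_space_def using fE by (simp add: card_PiE)

theorem lemma4p2:
  fixes E R :: "'e set" and p s q k :: nat
  assumes "finite E" and "R \<subseteq> E" and "card R \<le> p"
    and "s \<ge> 4" and "real q \<ge> 4 * exp 1 * real s * real p" and "k > 0"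
  shows "measure_pmf.prob (pmf_of_set (hash_space E s q)) {H. fails_at_least R s H k}
           \<le> 2 * (2 * real s * real k / real q) powr ((real s - 2) * real k / 2)"
proof (cases "R = {}")
  case True
  have "{H. fails_at_least R s H k} = {}"
  proof -
    { fix H assume "fails_at_least R s H k"
      then obtain S where S: "(peel_step s H)\<^sup>*\<^sup>* R S" "card S \<ge> k" unfolding fails_at_least_def by blast
      hence "S = {}" using reach_subset True by blast
      hence False using S(2) assms(6) by simp }
    thus ?thesis by blast
  qed
  thus ?thesis by simp
next
  case False
  note fE = assms(1)
  define B where "B = (2 * real s * real k / real q) powr ((real s - 2) * real k / 2)"
  have B0: "B \<ge> 0" unfolding B_def by simp
  have finR: "finite R" using assms(1,2) finite_subset by blast
  define N where "N = card R"
  have N1: "N \<ge> 1" using False finR unfolding N_def by (simp add: Suc_le_eq card_gt_0_iff)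
  have Np: "N \<le> p" using assms(3) unfolding N_def .
  have NE: "N \<le> card E" unfolding N_def using assms(1,2) by (rule card_mono)
  have p1: "p \<ge> 1" using N1 Np by simp
  have "4 * exp 1 * real s * real p > 0" using assms(4) p1 by simp
  hence "real q > 0" using assms(5) by linarith
  hence q0: "q > 0" by simp
  define \<Omega> where "\<Omega> = hash_space E s q"
  have finO: "finite \<Omega>" unfolding \<Omega>_def hash_space_def using fE by (intro finite_PiE) auto
  have nq: "{..<q} \<noteq> {}" using q0 by (metis lessThan_iff empty_iff)
  have neO: "\<Omega> \<noteq> {}" unfolding \<Omega>_def hash_space_def using nq by (simp add: PiE_eq_empty_iff)
  define m where "m t = s * t div 2" for t
  define Bad where "Bad S M = {H \<in> \<Omega>. \<forall>j<s. \<forall>e\<in>S. H j e \<in> M}" for S M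
  define SS where "SS t = {S. S \<subseteq> R \<and> card S = t}" for t
  define MM where "MM t = {M. M \<subseteq> {..<q} \<and> card M = m t}" for t
  have sub: "\<Omega> \<inter> {H. fails_at_least R s H k} \<subseteq> (\<Union>t\<in>{k..N}. \<Union>S\<in>SS t. \<Union>M\<in>MM t. Bad S M)"
  proof
    fix H assume H: "H \<in> \<Omega> \<inter> {H. fails_at_least R s H k}"
    then obtain S where S: "S \<subseteq> R" "k \<le> card S" "2 * card {i. \<exists>e\<in>S. participates s H e i} \<le> s * card S"
      using fails_imp[OF finR] by blast
    define t where "t = card S"
    define U where "U = {i. \<exists>e\<in>S. participates s H e i}"
    have tN: "t \<le> N" unfolding t_def N_def by (intro card_mono finR S(1))
    have HO: "H \<in> hash_space E s q" using H unfolding \<Omega>_def by simp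
    have UQ: "U \<subseteq> {..<q}"
    proof
      fix i assume "i \<in> U"
      then obtain e j where ej: "e \<in> S" "j < s" "H j e = i" unfolding U_def participates_def by blast
      have eE: "e \<in> E" using ej S(1) assms(2) by auto
      have "H j \<in> PiE E (\<lambda>_. {..<q})" using HO ej(2) unfolding hash_space_def by (auto dest: PiE_mem)
      hence "H j e \<in> {..<q}" using eE by (auto dest: PiE_mem)
      thus "i \<in> {..<q}" using ej by simp
    qed
    have "card U = (2 * card U) div 2" by simp
    also have "\<dots> \<le> (s * t) div 2" using S(3) unfolding U_def t_def by (rule div_le_mono)
    finally have Um: "card U \<le> m t" unfolding m_def .
    have mq: "m t \<le> card {..<q}" using m_le_q[OF order_trans[OF tN Np] assms(5)] unfolding m_def by simp
    obtain M where M: "U \<subseteq> M" "M \<subseteq> {..<q}" "card M = m t"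
      using extend_subset[of "{..<q}" U "m t"] UQ Um mq by auto
    have "\<forall>j<s. \<forall>e\<in>S. H j e \<in> M"
    proof (intro allI impI ballI)
      fix j e assume "j < s" "e \<in> S"
      hence "H j e \<in> U" unfolding U_def participates_def by blast
      thus "H j e \<in> M" using M(1) by blast
    qed
    hence "H \<in> Bad S M" unfolding Bad_def using H by blast
    moreover have "t \<in> {k..N}" using tN S(2) unfolding t_def by simp
    moreover have "S \<in> SS t" unfolding SS_def t_def using S(1) by simp
    moreover have "M \<in> MM t" unfolding MM_def using M by simp
    ultimately show "H \<in> (\<Union>t\<in>{k..N}. \<Union>S\<in>SS t. \<Union>M\<in>MM t. Bad S M)" by blast
  qed
  have cardBad: "card (Bad S M) = (m t ^ t * q ^ (card E - t)) ^ s" if "S \<in> SS t" "M \<in> MM t" for S M t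
  proof -
    have SE: "S \<subseteq> E" using that assms(2) unfolding SS_def by auto
    have Mq: "M \<subseteq> {..<q}" using that unfolding MM_def by auto
    show ?thesis using card_bad[OF fE SE Mq, of s] that unfolding Bad_def SS_def MM_def \<Omega>_def by auto
  qed
  have finSS: "finite (SS t)" for t
    by (rule finite_subset[of _ "Pow R"]) (auto simp: SS_def finR)
  have finMM: "finite (MM t)" for t
    by (rule finite_subset[of _ "Pow {..<q}"]) (auto simp: MM_def)
  have cSS: "card (SS t) = N choose t" for t unfolding SS_def N_def using n_subsets[OF finR] by simp
  have cMM: "card (MM t) = q choose m t" for t unfolding MM_def using n_subsets[of "{..<q}"] by simp
  define c where "c t = (N choose t) * ((q choose m t) * (m t ^ t * q ^ (card E - t)) ^ s)" for t
  have cnt: "card (\<Omega> \<inter> {H. fails_at_least R s H k}) \<le> (\<Sum>t\<in>{k..N}. c t)"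
  proof -
    have fU: "finite (\<Union>t\<in>{k..N}. \<Union>S\<in>SS t. \<Union>M\<in>MM t. Bad S M)"
      by (rule finite_subset[OF _ finO]) (auto simp: Bad_def)
    have "card (\<Omega> \<inter> {H. fails_at_least R s H k}) \<le> card (\<Union>t\<in>{k..N}. \<Union>S\<in>SS t. \<Union>M\<in>MM t. Bad S M)"
      by (rule card_mono[OF fU sub])
    also have "\<dots> \<le> (\<Sum>t\<in>{k..N}. card (\<Union>S\<in>SS t. \<Union>M\<in>MM t. Bad S M))" by (rule card_UN_le) simp
    also have "\<dots> \<le> (\<Sum>t\<in>{k..N}. c t)"
    proof (rule sum_mono)
      fix t
      have "card (\<Union>S\<in>SS t. \<Union>M\<in>MM t. Bad S M) \<le> (\<Sum>S\<in>SS t. card (\<Union>M\<in>MM t. Bad S M))"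
        by (rule card_UN_le[OF finSS])
      also have "\<dots> \<le> (\<Sum>S\<in>SS t. \<Sum>M\<in>MM t. card (Bad S M))"
        by (intro sum_mono card_UN_le finMM)
      also have "\<dots> = (\<Sum>S\<in>SS t. \<Sum>M\<in>MM t. (m t ^ t * q ^ (card E - t)) ^ s)"
        using cardBad by (intro sum.cong refl) auto
      also have "\<dots> = c t" unfolding c_def by (simp add: cSS cMM)
      finally show "card (\<Union>S\<in>SS t. \<Union>M\<in>MM t. Bad S M) \<le> c t" .
    qed
    finally show ?thesis .
  qed
  have "measure_pmf.prob (pmf_of_set \<Omega>) {H. fails_at_least R s H k}
        = real (card (\<Omega> \<inter> {H. fails_at_least R s H k})) / real (card \<Omega>)"
    using measure_pmf_of_set[OF neO finO] by simp
  also have "\<dots> \<le> real (\<Sum>t\<in>{k..N}. c t) / real (card \<Omega>)"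
  proof (rule divide_right_mono)
    show "real (card (\<Omega> \<inter> {H. fails_at_least R s H k})) \<le> real (\<Sum>t\<in>{k..N}. c t)"
      using cnt by (simp only: of_nat_le_iff)
  qed simp
  also have "\<dots> = (\<Sum>t\<in>{k..N}. real (c t) / real (card \<Omega>))"
    by (simp add: sum_divide_distrib)
  also have "\<dots> \<le> (\<Sum>t\<in>{k..N}. (1/2) ^ t * B)"
  proof (rule sum_mono)
    fix t assume t: "t \<in> {k..N}"
    have tE: "t \<le> card E" using t NE by simp
    have "real (c t) / real (card \<Omega>)
        = real (N choose t) * real (q choose m t) *
          ((real (m t) ^ t * real q ^ (card E - t)) ^ s / (real q ^ card E) ^ s)"
      unfolding c_def \<Omega>_def card_space[OF fE] by simp
    also have "\<dots> = real (N choose t) * real (q choose m t) * (real (m t) / real q) ^ (s * t)"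
      using ratio[OF q0 tE] by simp
    also have "\<dots> \<le> (1/2) ^ t * B"
      unfolding B_def m_def
      using term_bound[OF assms(4) _ _ _ Np assms(5), of k t] t assms(6) by simp
    finally show "real (c t) / real (card \<Omega>) \<le> (1/2) ^ t * B" .
  qed
  also have "\<dots> = B * (\<Sum>t\<in>{k..N}. (1/2::real) ^ t)"
    by (simp add: sum_distrib_left mult.commute)
  also have "\<dots> \<le> B * 2" using geom_half B0 by (intro mult_left_mono) auto
  finally show ?thesis unfolding \<Omega>_def B_def by simp
qed
end
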